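(* In the ROTAF procedure, under Assumption A and $B<\frac G2$, for every round $t$, $$\mathbb E\|\mathbf w_{t+1}-\mathbf w_t+\eta f'(\mathbf w_t)\|^2\le C_\alpha^2\,\eta^2\left(\delta^2+\kappa^2+\frac{p\sigma^2}{mPh_{\min}^2}K^2\right),$$ with $\alpha=B/G$ and $C_\alpha=\frac{2-2\alpha}{1-2\alpha}$.
   Context: Setting: $N$ clients, of which $B$ are Byzantine. The global loss is $f(\mathbf w)=\frac1N\sum_n f_n(\mathbf w)$, where $f_n(\mathbf w)=\mathbb E_{\xi\sim\mathcal D_n}f_n(\mathbf w,\xi)$. For an honest client $n$, $f'_{n,j}$ is an unbiased stochastic gradient of $f_n$ computed on a uniformly random sample $j$. Assumption A: constants $\mu,L,\delta,\kappa,K>0$ such that (i) $f$ is $\mu$-strongly convex; (ii) $f'$ is $L$-Lipschitz; (iii) $\|f'_n-f'\|^2\le\delta^2$ for honest $n$; (iv) $\mathbb E\|f'_{n,j}-f'_n\|^2\le\kappa^2$ for honest $n$; (v) $\mathbb E\|f'_{n,j}\|^2\le K^2$ for honest $n$. All bounds hold at every point. ROTAF procedure (step size $\eta$, power $P$, noise variance $\sigma^2$, threshold $h_{\min}>0$, group size $m$, $G=N/m$). At round $t$: 1. The clients are split uniformly at random into $G$ groups $\mathcal G_{t,g}$ of size $m$. 2. Each honest $n$ computes $\mathbf m_t^n=-\eta f'_{n,i_n^t}(\mathbf w_t)$. 3. Set $\rho_t=\sqrt{P/\max_n\mathbb E\|\mathbf m_t^n\|^2}$. All clients transmit. 4. For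 each group with no Byzantine client, the server gets $\mathbf u_g^t=\frac1m\sum_{n\in\mathcal G_{t,g}}\mathbf m_t^n+\mathbf z_{t,g}$, with independent noise $\mathbf z_{t,g}\sim\mathcal N(\mathbf0,\frac{\sigma^2}{m^2\rho_t^2h_{\min}^2}\mathbf I_p)$. Groups containing a Byzantine client produce arbitrary $\mathbf u_g^t$. 5. $\mathbf w_{t+1}=\mathbf w_t+\mathrm{geomed}(\mathbf u_1^t,\dots,\mathbf u_G^t)$, where $\mathrm{geomed}(\{\mathbf u_i\})=\arg\min_{\mathbf z}\sum_i\|\mathbf z-\mathbf u_i\|$. Expectations are over the stochastic gradients, the group assignment and the noise. *)

theory Defs
  imports "HOL-Analysis.Analysis" "HOL-Probability.Probability"
begin

definition strongly_convex :: "real \<Rightarrow> ('a::real_normed_vector \<Rightarrow> real) \<Rightarrow> bool" where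
  "strongly_convex \<mu> f \<longleftrightarrow>
     (\<forall>x y t. 0 \<le> t \<and> t \<le> 1 \<longrightarrow>
        f (t *\<^sub>R x + (1 - t) *\<^sub>R y) \<le> t * f x + (1 - t) * f y - \<mu> / 2 * t * (1 - t) * (norm (x - y))\<^sup>2)"

definition geomed :: "nat \<Rightarrow> (nat \<Rightarrow> 'a::real_normed_vector) \<Rightarrow> 'a" where
  "geomed G u = (SOME z. \<forall>y. (\<Sum>g<G. norm (z - u g)) \<le> (\<Sum>g<G. norm (y - u g)))"

definition std_gauss :: "'a::euclidean_space measure" where
  "std_gauss = density lborel
     (\<lambda>x. ennreal ((2 * pi) powr (- real DIM('a) / 2) * exp (- (norm x)\<^sup>2 / 2)))"

definition group_assignments :: "nat \<Rightarrow> nat \<Rightarrow> nat \<Rightarrow> (nat \<Rightarrow> nat) set" where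
  "group_assignments N G m =
     {a. (\<forall>n. N \<le> n \<longrightarrow> a n = 0) \<and> (\<forall>n<N. a n < G) \<and>
         (\<forall>g<G. card {n. n < N \<and> a n = g} = m)}"

definition loc_loss :: "(nat \<Rightarrow> nat \<Rightarrow> 'a \<Rightarrow> real) \<Rightarrow> (nat \<Rightarrow> nat) \<Rightarrow> nat \<Rightarrow> 'a \<Rightarrow> real" where
  "loc_loss l J n w = (\<Sum>j<J n. l n j w) / real (J n)"

definition glob_loss :: "nat \<Rightarrow> (nat \<Rightarrow> nat \<Rightarrow> 'a \<Rightarrow> real) \<Rightarrow> (nat \<Rightarrow> nat) \<Rightarrow> 'a \<Rightarrow> real" where
  "glob_loss N l J w = (\<Sum>n<N. loc_loss l J n w) / real N"

definition loc_grad :: "(nat \<Rightarrow> nat \<Rightarrow> 'a \<Rightarrow> 'a::real_vector) \<Rightarrow> (nat \<Rightarrow> nat) \<Rightarrow> nat \<Rightarrow> 'a \<Rightarrow> 'a" where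
  "loc_grad sg J n w = (1 / real (J n)) *\<^sub>R (\<Sum>j<J n. sg n j w)"

definition glob_grad :: "nat \<Rightarrow> (nat \<Rightarrow> nat \<Rightarrow> 'a \<Rightarrow> 'a::real_vector) \<Rightarrow> (nat \<Rightarrow> nat) \<Rightarrow> 'a \<Rightarrow> 'a" where
  "glob_grad N sg J w = (1 / real N) *\<^sub>R (\<Sum>n<N. loc_grad sg J n w)"

(* ROTAF: received signal of group g, given the group assignment a,
   the sample indices i, the standard-Gaussian draws zeta, the Byzantine
   outputs byz and the noise standard deviation s *)
definition rotaf_signal ::
  "nat set \<Rightarrow> nat \<Rightarrow> nat \<Rightarrow> real \<Rightarrow> (nat \<Rightarrow> nat \<Rightarrow> 'a \<Rightarrow> 'a::real_vector) \<Rightarrow> 'a \<Rightarrow> real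
   \<Rightarrow> (nat \<Rightarrow> nat) \<Rightarrow> (nat \<Rightarrow> nat) \<Rightarrow> (nat \<Rightarrow> 'a) \<Rightarrow> (nat \<Rightarrow> 'a) \<Rightarrow> nat \<Rightarrow> 'a" where
  "rotaf_signal Byz N m \<eta> sg w s a i zeta byz g =
     (if (\<exists>n\<in>Byz. a n = g) then byz g
      else (1 / real m) *\<^sub>R (\<Sum>n\<in>{n. n < N \<and> a n = g}. - \<eta> *\<^sub>R sg n (i n) w) + s *\<^sub>R zeta g)"

definition rotaf_rho ::
  "nat set \<Rightarrow> nat \<Rightarrow> real \<Rightarrow> real \<Rightarrow> (nat \<Rightarrow> nat \<Rightarrow> 'a \<Rightarrow> 'a::real_normed_vector) \<Rightarrow> (nat \<Rightarrow> nat) \<Rightarrow> 'a \<Rightarrow> real" where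
  "rotaf_rho Byz N P \<eta> sg J w =
     sqrt (P / Max ((\<lambda>n. (\<Sum>j<J n. (norm (- \<eta> *\<^sub>R sg n j w))\<^sup>2) / real (J n)) ` ({..<N} - Byz)))"

end

theory Submission imports Defs begin

lemma gauss1:
  fixes a s :: real
  shows "(\<integral>\<^sup>+ t. ennreal (std_normal_density t * (a + s*t)^2) \<partial>lborel) = ennreal (a^2 + s^2)"
proof -
  have h0: "has_bochner_integral lborel (\<lambda>x. std_normal_density x * x^(2*0)) 1"
    using std_normal_moment_even[of 0] by simp
  have h1: "has_bochner_integral lborel (\<lambda>x. std_normal_density x * x^(2*0+1)) 0"
    using std_normal_moment_odd[of 0] by simp
  have h2: "has_bochner_integral lborel (\<lambda>x. std_normal_density x * x^(2*1)) 1"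
    using std_normal_moment_even[of 1] by (simp add: fact_numeral)
  have "has_bochner_integral lborel (\<lambda>x. a^2 * (std_normal_density x * x^(2*0))
      + (2 * a * s) * (std_normal_density x * x^(2*0+1)) + s^2 * (std_normal_density x * x^(2*1)))
      (a^2 * 1 + (2 * a * s) * 0 + s^2 * 1)"
    by (intro has_bochner_integral_add has_bochner_integral_mult_right h0 h1 h2)
  moreover have "(\<lambda>x. a^2 * (std_normal_density x * x^(2*0))
      + (2 * a * s) * (std_normal_density x * x^(2*0+1)) + s^2 * (std_normal_density x * x^(2*1)))
     = (\<lambda>t. std_normal_density t * (a + s*t)^2)"
    by (rule ext) (simp add: power2_eq_square algebra_simps)
  ultimately have hb: "has_bochner_integral lborel (\<lambda>t. std_normal_density t * (a + s*t)^2) (a^2 + s^2)"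
    by simp
  show ?thesis
    using nn_integral_eq_integral[of lborel "\<lambda>t. std_normal_density t * (a + s*t)^2"]
      hb[unfolded has_bochner_integral_iff]
    by (simp add: std_normal_density_def)
qed

lemma psf_lborel: "product_sigma_finite (\<lambda>_. lborel::real measure)"
  by (rule product_sigma_finite.intro) (rule lborel.sigma_finite_measure_axioms)

lemma inner_Basis_sum:
  fixes \<phi> :: "'a::euclidean_space \<Rightarrow> real"
  assumes "b \<in> Basis"
  shows "(\<Sum>c\<in>Basis. \<phi> c *\<^sub>R c) \<bullet> b = \<phi> b"
  using assms by (simp add: inner_sum_left inner_Basis if_distrib[of "\<lambda>x. _ * x"] cong: if_cong)

lemma norm_Basis_sum:
  fixes \<phi> :: "'a::euclidean_space \<Rightarrow> real"
  shows "(norm (\<Sum>c\<in>Basis. \<phi> c *\<^sub>R c))\<^sup>2 = (\<Sum>b\<in>Basis. (\<phi> b)\<^sup>2)"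
proof -
  have "(norm (\<Sum>c\<in>Basis. \<phi> c *\<^sub>R c))\<^sup>2 = (\<Sum>c\<in>Basis. \<phi> c *\<^sub>R c) \<bullet> (\<Sum>c\<in>Basis. \<phi> c *\<^sub>R c)"
    by (simp add: power2_norm_eq_inner)
  also have "\<dots> = (\<Sum>b\<in>Basis. (\<phi> b)\<^sup>2)"
    by (subst euclidean_inner) (simp add: inner_Basis_sum power2_eq_square)
  finally show ?thesis .
qed

lemma gauss_dens_prod:
  fixes \<phi> :: "'a::euclidean_space \<Rightarrow> real"
  shows "(2 * pi) powr (- real DIM('a) / 2) * exp (- (norm (\<Sum>c\<in>Basis. \<phi> c *\<^sub>R c))\<^sup>2 / 2)
     = (\<Prod>b\<in>(Basis::'a set). std_normal_density (\<phi> b))"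
proof -
  have "(2 * pi) powr (- real DIM('a) / 2) = (1 / sqrt (2 * pi)) ^ DIM('a)"
  proof -
    have q: "0 < 2 * pi" by simp
    have "(2 * pi) powr (- real DIM('a) / 2) = inverse ((2 * pi) powr (real DIM('a) / 2))"
      by (metis minus_divide_left powr_minus)
    also have "(2 * pi) powr (real DIM('a) / 2) = ((2 * pi) powr (1/2)) powr real DIM('a)"
      by (simp only: powr_powr) (simp add: field_simps)
    also have "\<dots> = (sqrt (2 * pi)) ^ DIM('a)"
      using q by (simp only: powr_half_sqrt less_imp_le powr_realpow real_sqrt_gt_zero)
    finally show ?thesis by (simp only: power_one_over inverse_eq_divide)
  qed
  moreover have "exp (- (norm (\<Sum>c\<in>Basis. \<phi> c *\<^sub>R c))\<^sup>2 / 2) = (\<Prod>b\<in>(Basis::'a set). exp (- (\<phi> b)\<^sup>2 / 2))"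
  proof -
    have "- (\<Sum>b\<in>(Basis::'a set). (\<phi> b)\<^sup>2) / 2 = (\<Sum>b\<in>(Basis::'a set). - (\<phi> b)\<^sup>2 / 2)"
      by (simp only: sum_divide_distrib[symmetric] sum_negf)
    then show ?thesis by (simp only: norm_Basis_sum exp_sum[OF finite_Basis])
  qed
  ultimately show ?thesis
    by (simp only: std_normal_density_def prod.distrib prod_constant)
qed

lemma snd_nonneg: "0 \<le> std_normal_density t"
  by (simp add: std_normal_density_def)

lemma std_gauss_nn:
  fixes f :: "'a::euclidean_space \<Rightarrow> ennreal"
  assumes f: "f \<in> borel_measurable borel"
  shows "(\<integral>\<^sup>+x. f x \<partial>(std_gauss::'a measure)) =
    (\<integral>\<^sup>+\<phi>. (\<Prod>b\<in>Basis. ennreal (std_normal_density (\<phi> b))) * f (\<Sum>b\<in>Basis. \<phi> b *\<^sub>R b)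
       \<partial>PiM Basis (\<lambda>_. lborel))"
proof -
  let ?d = "\<lambda>x::'a. ennreal ((2 * pi) powr (- real DIM('a) / 2) * exp (- (norm x)\<^sup>2 / 2))"
  have dm: "?d \<in> borel_measurable borel" by measurable
  have T: "(\<lambda>\<phi>. \<Sum>b\<in>Basis. \<phi> b *\<^sub>R (b::'a)) \<in> PiM Basis (\<lambda>_. lborel) \<rightarrow>\<^sub>M borel"
    by measurable
  have "(\<integral>\<^sup>+x. f x \<partial>(std_gauss::'a measure)) = (\<integral>\<^sup>+x. ?d x * f x \<partial>lborel)"
    unfolding std_gauss_def using dm f by (intro nn_integral_density) auto
  also have "\<dots> = (\<integral>\<^sup>+\<phi>. ?d (\<Sum>b\<in>Basis. \<phi> b *\<^sub>R b) * f (\<Sum>b\<in>Basis. \<phi> b *\<^sub>R b) \<partial>PiM Basis (\<lambda>_. lborel))"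
    apply (subst lborel_eq[where 'a='a])
    apply (rule nn_integral_distr[OF T])
    using dm f by measurable
  also have "\<dots> = (\<integral>\<^sup>+\<phi>. (\<Prod>b\<in>Basis. ennreal (std_normal_density (\<phi> b))) * f (\<Sum>b\<in>Basis. \<phi> b *\<^sub>R b)
       \<partial>PiM Basis (\<lambda>_. lborel))"
    by (simp only: gauss_dens_prod prod_ennreal snd_nonneg)
  finally show ?thesis .
qed

lemma std_gauss_sq:
  fixes a :: "'a::euclidean_space" and s :: real
  shows "(\<integral>\<^sup>+x. ennreal ((norm (a + s *\<^sub>R x))\<^sup>2) \<partial>(std_gauss::'a measure))
       = ennreal ((norm a)\<^sup>2 + real DIM('a) * s\<^sup>2)"
proof -
  define h where "h c b t = ennreal (std_normal_density t *
      ((if b = c then a \<bullet> c else 1) + (if b = c then s else 0) * t)\<^sup>2)" for c b :: 'a and t :: real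
  have hm: "\<And>c b. h c b \<in> borel_measurable borel" unfolding h_def by measurable
  have nsq: "(norm (a + s *\<^sub>R (\<Sum>b\<in>Basis. \<phi> b *\<^sub>R b)))\<^sup>2 = (\<Sum>c\<in>Basis. (a \<bullet> c + s * \<phi> c)\<^sup>2)"
    for \<phi> :: "'a \<Rightarrow> real"
  proof -
    have "(norm (a + s *\<^sub>R (\<Sum>b\<in>Basis. \<phi> b *\<^sub>R b)))\<^sup>2
        = (a + s *\<^sub>R (\<Sum>b\<in>Basis. \<phi> b *\<^sub>R b)) \<bullet> (a + s *\<^sub>R (\<Sum>b\<in>Basis. \<phi> b *\<^sub>R b))"
      by (simp add: power2_norm_eq_inner)
    also have "\<dots> = (\<Sum>c\<in>Basis. (a \<bullet> c + s * \<phi> c)\<^sup>2)"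
      by (subst euclidean_inner) (simp add: inner_add_left inner_Basis_sum power2_eq_square)
    finally show ?thesis .
  qed
  have pw: "(\<Prod>b\<in>Basis. ennreal (std_normal_density (\<phi> b))) * ennreal ((norm (a + s *\<^sub>R (\<Sum>b\<in>Basis. \<phi> b *\<^sub>R b)))\<^sup>2)
     = (\<Sum>c\<in>Basis. \<Prod>b\<in>Basis. h c b (\<phi> b))" for \<phi> :: "'a \<Rightarrow> real"
  proof -
    have r: "(\<Prod>b\<in>Basis. std_normal_density (\<phi> b) *
      ((if b = c then a \<bullet> c else 1) + (if b = c then s else 0) * \<phi> b)\<^sup>2)
      = (\<Prod>b\<in>Basis. std_normal_density (\<phi> b)) * (a \<bullet> c + s * \<phi> c)\<^sup>2" if c: "c \<in> Basis" for c
    proof -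
      have "(\<Prod>b\<in>Basis. std_normal_density (\<phi> b) *
        ((if b = c then a \<bullet> c else 1) + (if b = c then s else 0) * \<phi> b)\<^sup>2)
        = (\<Prod>b\<in>Basis. std_normal_density (\<phi> b) * (if b = c then (a \<bullet> c + s * \<phi> c)\<^sup>2 else 1))"
        by (rule prod.cong) auto
      also have "\<dots> = (\<Prod>b\<in>Basis. std_normal_density (\<phi> b)) * (a \<bullet> c + s * \<phi> c)\<^sup>2"
        using c by (simp add: prod.distrib)
      finally show ?thesis .
    qed
    have "(\<Sum>c\<in>Basis. \<Prod>b\<in>Basis. h c b (\<phi> b)) = (\<Sum>c\<in>Basis. ennreal ((\<Prod>b\<in>Basis. std_normal_density (\<phi> b)) * (a \<bullet> c + s * \<phi> c)\<^sup>2))"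
      unfolding h_def
      by (rule sum.cong[OF refl], subst prod_ennreal) (auto simp: snd_nonneg r)
    also have "\<dots> = ennreal (\<Sum>c\<in>Basis. (\<Prod>b\<in>Basis. std_normal_density (\<phi> b)) * (a \<bullet> c + s * \<phi> c)\<^sup>2)"
      by (rule sum_ennreal) (simp add: snd_nonneg prod_nonneg)
    also have "\<dots> = ennreal ((\<Prod>b\<in>Basis. std_normal_density (\<phi> b)) * (norm (a + s *\<^sub>R (\<Sum>b\<in>Basis. \<phi> b *\<^sub>R b)))\<^sup>2)"
      by (simp add: nsq sum_distrib_left)
    also have "\<dots> = (\<Prod>b\<in>Basis. ennreal (std_normal_density (\<phi> b))) * ennreal ((norm (a + s *\<^sub>R (\<Sum>b\<in>Basis. \<phi> b *\<^sub>R b)))\<^sup>2)"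
      by (simp add: ennreal_mult prod_ennreal snd_nonneg prod_nonneg)
    finally show ?thesis by simp
  qed
  have "(\<integral>\<^sup>+x. ennreal ((norm (a + s *\<^sub>R x))\<^sup>2) \<partial>(std_gauss::'a measure))
     = (\<integral>\<^sup>+\<phi>. (\<Prod>b\<in>Basis. ennreal (std_normal_density (\<phi> b))) * ennreal ((norm (a + s *\<^sub>R (\<Sum>b\<in>Basis. \<phi> b *\<^sub>R b)))\<^sup>2)
       \<partial>PiM Basis (\<lambda>_. lborel))"
    by (rule std_gauss_nn) measurable
  also have "\<dots> = (\<integral>\<^sup>+\<phi>. (\<Sum>c\<in>Basis. \<Prod>b\<in>Basis. h c b (\<phi> b)) \<partial>PiM Basis (\<lambda>_. lborel))"
    by (simp only: pw)
  also have "\<dots> = (\<Sum>c\<in>Basis. \<integral>\<^sup>+\<phi>. (\<Prod>b\<in>Basis. h c b (\<phi> b)) \<partial>PiM Basis (\<lambda>_. lborel))"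
    by (rule nn_integral_sum) (use hm in measurable)
  also have "\<dots> = (\<Sum>c\<in>Basis. \<Prod>b\<in>Basis. \<integral>\<^sup>+t. h c b t \<partial>lborel)"
    by (rule sum.cong[OF refl], rule product_sigma_finite.product_nn_integral_prod[OF psf_lborel])
       (auto simp: hm)
  also have "\<dots> = (\<Sum>c\<in>Basis. \<Prod>b\<in>Basis. ennreal (if b = c then (a \<bullet> c)\<^sup>2 + s\<^sup>2 else 1))"
    unfolding h_def gauss1 by (intro sum.cong prod.cong refl) auto
  also have "\<dots> = (\<Sum>c\<in>Basis. ennreal ((a \<bullet> c)\<^sup>2 + s\<^sup>2))"
    by (intro sum.cong refl) (simp add: if_distrib[of ennreal] cong: if_cong)
  also have "\<dots> = ennreal (\<Sum>c\<in>Basis. (a \<bullet> c)\<^sup>2 + s\<^sup>2)"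
    by (rule sum_ennreal) simp
  also have "\<dots> = ennreal ((norm a)\<^sup>2 + real DIM('a) * s\<^sup>2)"
  proof -
    have "(norm a)\<^sup>2 = (\<Sum>c\<in>Basis. (a \<bullet> c)\<^sup>2)"
      by (metis (no_types) euclidean_inner power2_eq_square power2_norm_eq_inner sum.cong)
    then show ?thesis by (simp add: sum.distrib)
  qed
  finally show ?thesis .
qed

lemma std_gauss_prob: "prob_space (std_gauss :: 'a::euclidean_space measure)"
proof (rule prob_spaceI)
  have g: "(\<integral>\<^sup>+t. ennreal (std_normal_density t) \<partial>lborel) = 1"
    using gauss1[of 1 0] by simp
  have "(\<integral>\<^sup>+x. 1 \<partial>(std_gauss::'a measure)) =
    (\<integral>\<^sup>+\<phi>. (\<Prod>b\<in>Basis. ennreal (std_normal_density (\<phi> b))) * 1 \<partial>PiM (Basis::'a set) (\<lambda>_. lborel))"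
    using std_gauss_nn[of "\<lambda>_::'a. 1"] by simp
  also have "\<dots> = (\<Prod>b\<in>(Basis::'a set). \<integral>\<^sup>+t. ennreal (std_normal_density t) \<partial>lborel)"
    by (simp only: mult_1_right,
        rule product_sigma_finite.product_nn_integral_prod[OF psf_lborel]) auto
  also have "\<dots> = 1" by (simp add: g)
  finally show "emeasure (std_gauss :: 'a measure) (space std_gauss) = 1"
    by (simp add: nn_integral_const)
qed

lemma PiM_component_nn:
  assumes M: "prob_space M" and g: "g \<in> I" and I: "finite I" and f: "f \<in> borel_measurable M"
  shows "(\<integral>\<^sup>+y. f (y g) \<partial>PiM I (\<lambda>_. M)) = (\<integral>\<^sup>+x. f x \<partial>M)"
proof -
  have psf: "product_sigma_finite (\<lambda>_::'i. M)"
    by (rule product_sigma_finite.intro) (rule prob_space_imp_sigma_finite[OF M])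
  define F where "F i = (if i = g then f else (\<lambda>_. 1))" for i
  have "(\<integral>\<^sup>+y. f (y g) \<partial>PiM I (\<lambda>_. M)) = (\<integral>\<^sup>+y. (\<Prod>i\<in>I. F i (y i)) \<partial>PiM I (\<lambda>_. M))"
  proof (rule nn_integral_cong)
    fix y
    have "(\<Prod>i\<in>I. F i (y i)) = (\<Prod>i\<in>I. if i = g then f (y i) else 1)"
      by (rule prod.cong) (auto simp: F_def)
    also have "\<dots> = f (y g)" using g I by (simp add: prod.delta')
    finally show "f (y g) = (\<Prod>i\<in>I. F i (y i))" by simp
  qed
  also have "\<dots> = (\<Prod>i\<in>I. \<integral>\<^sup>+x. F i x \<partial>M)"
    by (rule product_sigma_finite.product_nn_integral_prod[OF psf I]) (simp add: F_def f)
  also have "\<dots> = (\<integral>\<^sup>+x. f x \<partial>M)"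
  proof -
    have "(\<Prod>i\<in>I. \<integral>\<^sup>+x. F i x \<partial>M) = (\<Prod>i\<in>I. if i = g then \<integral>\<^sup>+x. f x \<partial>M else 1)"
      by (rule prod.cong) (auto simp: F_def nn_integral_const prob_space.emeasure_space_1[OF M])
    also have "\<dots> = (\<integral>\<^sup>+x. f x \<partial>M)" using g I by (simp add: prod.delta')
    finally show ?thesis .
  qed
  finally show ?thesis .
qed

lemma geomed_min:
  fixes u :: "nat \<Rightarrow> 'a::euclidean_space"
  assumes G: "0 < G"
  shows "(\<Sum>g<G. norm (geomed G u - u g)) \<le> (\<Sum>g<G. norm (y - u g))"
proof -
  define F where "F z = (\<Sum>g<G. norm (z - u g))" for z
  define S0 where "S0 = F 0"
  have S0n: "0 \<le> S0" unfolding S0_def F_def by (simp add: sum_nonneg)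
  have u0: "norm (u 0) \<le> S0"
    unfolding S0_def F_def using G by (simp add: member_le_sum[of 0 "{..<G}" "\<lambda>g. norm (u g)"])
  have Fy: "norm (y - u 0) \<le> F y" for y
    unfolding F_def using G by (intro member_le_sum[of 0 "{..<G}" "\<lambda>g. norm (y - u g)"]) auto
  have cont: "continuous_on (cball 0 (2 * S0)) F"
    unfolding F_def by (intro continuous_intros)
  obtain z0 where z0: "z0 \<in> cball 0 (2 * S0)" and zm: "\<forall>y\<in>cball 0 (2 * S0). F z0 \<le> F y"
    using continuous_attains_inf[OF compact_cball _ cont] S0n by fastforce
  have all: "F z0 \<le> F y" for y
  proof (cases "y \<in> cball 0 (2 * S0)")
    case True then show ?thesis using zm by auto
  next
    case False
    then have "norm y > 2 * S0" by simp
    moreover have "norm y - norm (u 0) \<le> norm (y - u 0)" by (rule norm_triangle_ineq2)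
    moreover have "F z0 \<le> S0" using zm S0n unfolding S0_def by auto
    ultimately show ?thesis using Fy[of y] u0 by linarith
  qed
  then have "\<exists>z. \<forall>y. F z \<le> F y" by blast
  then have "\<forall>y. F (geomed G u) \<le> F y"
    unfolding geomed_def F_def by (rule someI_ex)
  then show ?thesis unfolding F_def by blast
qed

lemma geomed_lin:
  fixes u :: "nat \<Rightarrow> 'a::real_normed_vector" and x z :: 'a
  assumes zmin: "(\<Sum>g<G. norm (z - u g)) \<le> (\<Sum>g<G. norm (x - u g))"
    and Gd: "Gd \<subseteq> {..<G}"
  shows "(real (card Gd) - real (card ({..<G} - Gd))) * norm (z - x) \<le> 2 * (\<Sum>g\<in>Gd. norm (u g - x))"
proof -
  let ?B = "{..<G} - Gd"
  have fin: "finite Gd" "finite ?B" using Gd finite_subset by auto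
  have split: "(\<Sum>g<G. f g) = (\<Sum>g\<in>Gd. f g) + (\<Sum>g\<in>?B. f g)" for f :: "nat \<Rightarrow> real"
    using Gd by (metis Diff_partition finite_lessThan sum.subset_diff add.commute)
  have a: "(\<Sum>g\<in>Gd. norm (z - x) - norm (u g - x)) \<le> (\<Sum>g\<in>Gd. norm (z - u g))"
  proof (rule sum_mono)
    fix g show "norm (z - x) - norm (u g - x) \<le> norm (z - u g)"
      using norm_triangle_ineq[of "z - u g" "u g - x"] by simp
  qed
  have b: "(\<Sum>g\<in>?B. norm (u g - x) - norm (z - x)) \<le> (\<Sum>g\<in>?B. norm (z - u g))"
  proof (rule sum_mono)
    fix g show "norm (u g - x) - norm (z - x) \<le> norm (z - u g)"
      using norm_triangle_ineq[of "u g - z" "z - x"] by (simp add: norm_minus_commute)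
  qed
  have c: "(\<Sum>g<G. norm (x - u g)) = (\<Sum>g\<in>Gd. norm (u g - x)) + (\<Sum>g\<in>?B. norm (u g - x))"
    by (subst split) (simp add: norm_minus_commute)
  have "(\<Sum>g\<in>Gd. norm (z - x) - norm (u g - x)) + (\<Sum>g\<in>?B. norm (u g - x) - norm (z - x))
      \<le> (\<Sum>g\<in>Gd. norm (u g - x)) + (\<Sum>g\<in>?B. norm (u g - x))"
    using a b zmin c split[of "\<lambda>g. norm (z - u g)"] by linarith
  then show ?thesis
    by (simp add: sum_subtractf algebra_simps)
qed

lemma geomed_sq:
  fixes u :: "nat \<Rightarrow> 'a::real_normed_vector" and x z :: 'a
  assumes zmin: "(\<Sum>g<G. norm (z - u g)) \<le> (\<Sum>g<G. norm (x - u g))"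
    and Gd: "Gd \<subseteq> {..<G}"
    and k: "real (card ({..<G} - Gd)) < real (card Gd)"
    and C: "2 * real (card Gd) / (real (card Gd) - real (card ({..<G} - Gd))) \<le> C"
  shows "(norm (z - x))\<^sup>2 \<le> C\<^sup>2 / real (card Gd) * (\<Sum>g\<in>Gd. (norm (u g - x))\<^sup>2)"
proof -
  define k where "k = real (card Gd)"
  define b where "b = real (card ({..<G} - Gd))"
  define S where "S = (\<Sum>g\<in>Gd. norm (u g - x))"
  define Q where "Q = (\<Sum>g\<in>Gd. (norm (u g - x))\<^sup>2)"
  have kb: "0 < k - b" using k unfolding k_def b_def by simp
  have k0: "0 < k" using k unfolding k_def b_def by simp
  have lin: "(k - b) * norm (z - x) \<le> 2 * S"
    using geomed_lin[OF zmin Gd] unfolding k_def b_def S_def .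
  have S0: "0 \<le> S" unfolding S_def by (simp add: sum_nonneg)
  have CS: "S\<^sup>2 \<le> k * Q"
    using sum_squared_le_sum_of_squares[of "\<lambda>g. norm (u g - x)" Gd] unfolding S_def Q_def k_def
    by (simp add: mult.commute)
  have Q0: "0 \<le> Q" unfolding Q_def by (simp add: sum_nonneg)
  have d: "norm (z - x) \<le> 2 * S / (k - b)" using lin kb by (simp add: field_simps)
  have "(norm (z - x))\<^sup>2 \<le> (2 * S / (k - b))\<^sup>2"
    by (rule power_mono[OF d]) simp
  also have "\<dots> = 4 * S\<^sup>2 / (k - b)\<^sup>2" by (simp add: power_divide power_mult_distrib)
  also have "\<dots> \<le> 4 * (k * Q) / (k - b)\<^sup>2"
    by (intro divide_right_mono mult_left_mono CS) auto
  also have "\<dots> = (2 * k / (k - b))\<^sup>2 / k * Q"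
  proof -
    have "\<And>d. 0 < d \<Longrightarrow> 4 * (k * Q) / d\<^sup>2 = (2 * k / d)\<^sup>2 / k * Q"
      using k0 by (simp add: field_simps power2_eq_square)
    then show ?thesis using kb by blast
  qed
  also have "\<dots> \<le> C\<^sup>2 / k * Q"
  proof -
    have p: "0 \<le> 2 * k / (k - b)" using k0 kb by simp
    have "(2 * k / (k - b))\<^sup>2 \<le> C\<^sup>2"
      by (rule power_mono) (use C p in \<open>auto simp: k_def b_def\<close>)
    then show ?thesis using k0 Q0 by (intro mult_right_mono divide_right_mono) auto
  qed
  finally show ?thesis unfolding k_def Q_def .
qed

lemma var_decomp:
  fixes v :: "nat \<Rightarrow> 'a::real_inner" and c :: 'a
  assumes J: "0 < J"
  shows "(\<Sum>j<J. (norm (v j - c))\<^sup>2) =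
     (\<Sum>j<J. (norm (v j - (1 / real J) *\<^sub>R (\<Sum>j<J. v j)))\<^sup>2)
       + real J * (norm ((1 / real J) *\<^sub>R (\<Sum>j<J. v j) - c))\<^sup>2"
proof -
  define \<mu> where "\<mu> = (1 / real J) *\<^sub>R (\<Sum>j<J. v j)"
  have s0: "(\<Sum>j<J. v j - \<mu>) = 0"
    using J by (simp add: \<mu>_def sum_subtractf sum_constant_scaleR)
  have e: "(norm (v j - c))\<^sup>2 = (norm (v j - \<mu>))\<^sup>2 + 2 * ((v j - \<mu>) \<bullet> (\<mu> - c)) + (norm (\<mu> - c))\<^sup>2" for j
  proof -
    have sq: "\<And>a b::'a. (norm (a + b))\<^sup>2 = (norm a)\<^sup>2 + 2 * (a \<bullet> b) + (norm b)\<^sup>2"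
      by (simp add: power2_norm_eq_inner inner_add_left inner_add_right inner_commute)
    have "v j - c = (v j - \<mu>) + (\<mu> - c)" by simp
    then show ?thesis by (metis sq)
  qed
  have "(\<Sum>j<J. (v j - \<mu>) \<bullet> (\<mu> - c)) = (\<Sum>j<J. v j - \<mu>) \<bullet> (\<mu> - c)"
    by (simp add: inner_sum_left)
  also have "\<dots> = 0" by (simp add: s0)
  finally have z: "(\<Sum>j<J. (v j - \<mu>) \<bullet> (\<mu> - c)) = 0" .
  have "(\<Sum>j<J. (norm (v j - c))\<^sup>2) = (\<Sum>j<J. (norm (v j - \<mu>))\<^sup>2) + 2 * (\<Sum>j<J. (v j - \<mu>) \<bullet> (\<mu> - c)) + real J * (norm (\<mu> - c))\<^sup>2"
    by (simp add: e sum.distrib sum_distrib_left)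
  then show ?thesis using z unfolding \<mu>_def by simp
qed

lemma norm_sum_sq:
  fixes v :: "nat \<Rightarrow> 'a::real_normed_vector"
  shows "(norm (\<Sum>n\<in>S. v n))\<^sup>2 \<le> real (card S) * (\<Sum>n\<in>S. (norm (v n))\<^sup>2)"
proof -
  have "(norm (\<Sum>n\<in>S. v n))\<^sup>2 \<le> (\<Sum>n\<in>S. norm (v n))\<^sup>2"
    by (rule power_mono[OF norm_sum]) simp
  also have "\<dots> \<le> (\<Sum>n\<in>S. (norm (v n))\<^sup>2) * real (card S)" by (rule sum_squared_le_sum_of_squares)
  finally show ?thesis by (simp add: mult.commute)
qed

lemma group_exp:
  fixes sg :: "nat \<Rightarrow> nat \<Rightarrow> 'a \<Rightarrow> 'a::euclidean_space" and c w :: 'a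
  assumes S: "S \<subseteq> H" "card S = m" "0 < m" and H: "finite H"
   and J: "\<And>n. n \<in> H \<Longrightarrow> 0 < J n"
   and bnd: "\<And>n. n \<in> H \<Longrightarrow> (\<Sum>j<J n. (norm (sg n j w - c))\<^sup>2) / real (J n) \<le> D"
   and D: "0 \<le> D"
  shows "(\<integral>\<^sup>+i. ennreal ((norm ((1 / real m) *\<^sub>R (\<Sum>n\<in>S. - \<eta> *\<^sub>R sg n (i n) w) + \<eta> *\<^sub>R c))\<^sup>2)
           \<partial>measure_pmf (Pi_pmf H 0 (\<lambda>n. pmf_of_set {..<J n}))) \<le> ennreal (\<eta>\<^sup>2 * D)"
proof -
  let ?P = "Pi_pmf H 0 (\<lambda>n. pmf_of_set {..<J n})"
  let ?X = "\<lambda>n j. (norm (sg n j w - c))\<^sup>2"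
  have finS: "finite S" using S H finite_subset by blast
  have pw: "(norm ((1 / real m) *\<^sub>R (\<Sum>n\<in>S. - \<eta> *\<^sub>R sg n (i n) w) + \<eta> *\<^sub>R c))\<^sup>2
      \<le> (\<Sum>n\<in>S. \<eta>\<^sup>2 / real m * ?X n (i n))" for i :: "nat \<Rightarrow> nat"
  proof -
    have V: "(\<Sum>n\<in>S. - \<eta> *\<^sub>R sg n (i n) w) = (- \<eta>) *\<^sub>R (\<Sum>n\<in>S. sg n (i n) w)"
      by (simp add: scaleR_sum_right)
    have W: "(\<Sum>n\<in>S. sg n (i n) w - c) = (\<Sum>n\<in>S. sg n (i n) w) - real m *\<^sub>R c"
      using S by (simp add: sum_subtractf sum_constant_scaleR)
    have "(1 / real m) *\<^sub>R (\<Sum>n\<in>S. - \<eta> *\<^sub>R sg n (i n) w) + \<eta> *\<^sub>R c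
        = (- \<eta> / real m) *\<^sub>R (\<Sum>n\<in>S. sg n (i n) w - c)"
      using S by (simp only: V W scaleR_diff_right scaleR_scaleR) (simp add: algebra_simps)
    then have "(norm ((1 / real m) *\<^sub>R (\<Sum>n\<in>S. - \<eta> *\<^sub>R sg n (i n) w) + \<eta> *\<^sub>R c))\<^sup>2
        = (\<eta> / real m)\<^sup>2 * (norm (\<Sum>n\<in>S. sg n (i n) w - c))\<^sup>2"
      by (simp add: power_mult_distrib power_divide)
    also have "\<dots> \<le> (\<eta> / real m)\<^sup>2 * (real m * (\<Sum>n\<in>S. ?X n (i n)))"
      by (rule mult_left_mono) (use norm_sum_sq[of "\<lambda>n. sg n (i n) w - c" S] S in auto)
    also have "\<dots> = (\<Sum>n\<in>S. \<eta>\<^sup>2 / real m * ?X n (i n))"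
      using S by (simp add: sum_distrib_left power2_eq_square mult.assoc)
    finally show ?thesis .
  qed
  have comp: "(\<integral>\<^sup>+i. ennreal (\<eta>\<^sup>2 / real m * ?X n (i n)) \<partial>measure_pmf ?P) \<le> ennreal (\<eta>\<^sup>2 / real m * D)"
    if n: "n \<in> S" for n
  proof -
    have nH: "n \<in> H" using n S by auto
    have "(\<integral>\<^sup>+i. ennreal (\<eta>\<^sup>2 / real m * ?X n (i n)) \<partial>measure_pmf ?P)
       = (\<integral>\<^sup>+j. ennreal (\<eta>\<^sup>2 / real m * ?X n j) \<partial>measure_pmf (map_pmf (\<lambda>i. i n) ?P))"
      by (simp add: nn_integral_map_pmf)
    also have "\<dots> = (\<integral>\<^sup>+j. ennreal (\<eta>\<^sup>2 / real m * ?X n j) \<partial>measure_pmf (pmf_of_set {..<J n}))"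
      using nH H by (simp add: Pi_pmf_component)
    also have "\<dots> = (\<Sum>j<J n. ennreal (\<eta>\<^sup>2 / real m * ?X n j)) / of_nat (J n)"
      using J[OF nH] by (subst nn_integral_pmf_of_set) auto
    also have "\<dots> = ennreal (\<eta>\<^sup>2 / real m * ((\<Sum>j<J n. ?X n j) / real (J n)))"
      using J[OF nH] by (simp add: sum_ennreal ennreal_of_nat_eq_real_of_nat divide_ennreal
            sum_distrib_left[symmetric] sum_divide_distrib[symmetric] sum_nonneg)
    also have "\<dots> \<le> ennreal (\<eta>\<^sup>2 / real m * D)"
      by (intro ennreal_leI mult_left_mono bnd[OF nH]) auto
    finally show ?thesis .
  qed
  have "(\<integral>\<^sup>+i. ennreal ((norm ((1 / real m) *\<^sub>R (\<Sum>n\<in>S. - \<eta> *\<^sub>R sg n (i n) w) + \<eta> *\<^sub>R c))\<^sup>2) \<partial>measure_pmf ?P)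
      \<le> (\<integral>\<^sup>+i. (\<Sum>n\<in>S. ennreal (\<eta>\<^sup>2 / real m * ?X n (i n))) \<partial>measure_pmf ?P)"
  proof (intro nn_integral_mono)
    fix i :: "nat \<Rightarrow> nat"
    have "(\<Sum>n\<in>S. ennreal (\<eta>\<^sup>2 / real m * ?X n (i n))) = ennreal (\<Sum>n\<in>S. \<eta>\<^sup>2 / real m * ?X n (i n))"
      by (rule sum_ennreal) simp
    then show "ennreal ((norm ((1 / real m) *\<^sub>R (\<Sum>n\<in>S. - \<eta> *\<^sub>R sg n (i n) w) + \<eta> *\<^sub>R c))\<^sup>2)
      \<le> (\<Sum>n\<in>S. ennreal (\<eta>\<^sup>2 / real m * ?X n (i n)))"
      using pw[of i] by (simp only: ennreal_leI)
  qed
  also have "\<dots> = (\<Sum>n\<in>S. \<integral>\<^sup>+i. ennreal (\<eta>\<^sup>2 / real m * ?X n (i n)) \<partial>measure_pmf ?P)"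
    by (rule nn_integral_sum) simp
  also have "\<dots> \<le> (\<Sum>n\<in>S. ennreal (\<eta>\<^sup>2 / real m * D))"
    by (rule sum_mono) (rule comp)
  also have "\<dots> = ennreal (\<eta>\<^sup>2 * D)"
    using S D by (simp add: sum_ennreal ennreal_of_nat_eq_real_of_nat ennreal_mult[symmetric])
  finally show ?thesis .
qed

lemma GA_props:
  assumes "N = G * m" "0 < m"
  shows "finite (group_assignments N G m)" "group_assignments N G m \<noteq> {}"
proof -
  let ?E = "PiE {..<N} (\<lambda>_. {..<G})"
  have "group_assignments N G m \<subseteq> (\<lambda>f n. if n < N then f n else 0) ` ?E"
  proof
    fix a assume a: "a \<in> group_assignments N G m"
    then have "a = (\<lambda>n. if n < N then restrict a {..<N} n else 0)"
      unfolding group_assignments_def by (auto simp: fun_eq_iff)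
    moreover have "restrict a {..<N} \<in> ?E" using a unfolding group_assignments_def by auto
    ultimately show "a \<in> (\<lambda>f n. if n < N then f n else 0) ` ?E" by blast
  qed
  then show "finite (group_assignments N G m)"
    by (rule finite_subset) (intro finite_imageI finite_PiE; simp)
  define a0 where "a0 n = (if n < N then n div m else 0)" for n
  have "a0 \<in> group_assignments N G m"
    unfolding group_assignments_def
  proof (intro CollectI conjI allI impI)
    fix n assume "N \<le> n" then show "a0 n = 0" by (simp add: a0_def)
  next
    fix n assume "n < N" then show "a0 n < G"
      using assms by (simp add: a0_def less_mult_imp_div_less)
  next
    fix g assume g: "g < G"
    have "{n. n < N \<and> a0 n = g} = {g * m..<g * m + m}"
    proof (intro set_eqI iffI)
      fix n assume "n \<in> {n. n < N \<and> a0 n = g}"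
      then have "n div m = g" by (auto simp: a0_def split: if_splits)
      then have e: "n = g * m + n mod m" by (metis div_mult_mod_eq)
      have "n mod m < m" using assms(2) by simp
      then show "n \<in> {g * m..<g * m + m}" using e
        by (simp only: atLeastLessThan_iff) linarith
    next
      fix n assume n: "n \<in> {g * m..<g * m + m}"
      have "n div m = g" using n assms by (intro div_nat_eqI) (auto simp: mult.commute)
      moreover have "n < N"
      proof -
        have "g * m + m \<le> G * m" using g by (metis Suc_leI add.commute mult_Suc mult_le_mono1)
        then show ?thesis using n assms by auto
      qed
      ultimately show "n \<in> {n. n < N \<and> a0 n = g}" by (simp add: a0_def)
    qed
    then show "card {n. n < N \<and> a0 n = g} = m" by simp
  qed
  then show "group_assignments N G m \<noteq> {}" by blast
qed

lemma C_bound: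
  fixes b B' G' :: real
  assumes "0 \<le> b" "b \<le> B'" "2 * B' < G'"
  shows "2 * (G' - b) / ((G' - b) - b) \<le> (2 - 2 * (B' / G')) / (1 - 2 * (B' / G'))"
proof -
  have G: "0 < G'" using assms by linarith
  have d1: "0 < G' - 2 * b" using assms by linarith
  have d2: "0 < G' - 2 * B'" using assms by linarith
  have r: "(2 - 2 * (B' / G')) / (1 - 2 * (B' / G')) = (2 * G' - 2 * B') / (G' - 2 * B')"
  proof -
    have "2 - 2 * (B' / G') = (2 * G' - 2 * B') / G'" "1 - 2 * (B' / G') = (G' - 2 * B') / G'"
      using G by (simp_all add: field_simps)
    then show ?thesis using G d2 by simp
  qed
  have eq: "(2 * G' - 2 * B') * (G' - 2 * b) - 2 * (G' - b) * (G' - 2 * B') = 2 * G' * (B' - b)"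
    by (simp add: algebra_simps)
  have "0 \<le> 2 * G' * (B' - b)" using G assms by simp
  then have ineq: "2 * (G' - b) * (G' - 2 * B') \<le> (2 * G' - 2 * B') * (G' - 2 * b)" using eq by linarith
  have "2 * (G' - b) / (G' - 2 * b) \<le> (2 * G' - 2 * B') / (G' - 2 * B')"
    using ineq d1 d2 by (simp add: divide_le_eq le_divide_eq mult.commute mult.left_commute) 
  then show ?thesis using r by (simp add: algebra_simps)
qed


theorem mainTheorem5:
  fixes N G m B :: nat and Byz :: "nat set"
    and l :: "nat \<Rightarrow> nat \<Rightarrow> 'a::euclidean_space \<Rightarrow> real"
    and sg :: "nat \<Rightarrow> nat \<Rightarrow> 'a \<Rightarrow> 'a"
    and J :: "nat \<Rightarrow> nat"
    and \<mu> L \<delta> \<kappa> K \<eta> P \<sigma> hmin :: real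
    and w :: 'a
    and byz :: "(((nat \<Rightarrow> nat) \<times> (nat \<Rightarrow> nat)) \<times> (nat \<Rightarrow> 'a)) \<Rightarrow> nat \<Rightarrow> 'a"
  assumes groups: "N = G * m" "0 < m"
    and byz_set: "Byz \<subseteq> {..<N}" "card Byz = B"
    and few_byz: "real B < real G / 2"
    and params: "0 < \<eta>" "0 < P" "0 \<le> \<sigma>" "0 < hmin"
    and constants: "0 < \<mu>" "0 < L" "0 < \<delta>" "0 < \<kappa>" "0 < K"
    and samples: "\<And>n. n < N \<Longrightarrow> 0 < J n"
    and sample_grad: "\<And>n j x. n < N \<Longrightarrow> j < J n \<Longrightarrow>
                        (l n j has_derivative (\<lambda>h. sg n j x \<bullet> h)) (at x)"
    and A1: "strongly_convex \<mu> (glob_loss N l J)"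
    and A2: "L-lipschitz_on UNIV (glob_grad N sg J)"
    and A3: "\<And>n x. n \<in> {..<N} - Byz \<Longrightarrow> (norm (loc_grad sg J n x - glob_grad N sg J x))\<^sup>2 \<le> \<delta>\<^sup>2"
    and A4: "\<And>n x. n \<in> {..<N} - Byz \<Longrightarrow>
               (\<Sum>j<J n. (norm (sg n j x - loc_grad sg J n x))\<^sup>2) / real (J n) \<le> \<kappa>\<^sup>2"
    and A5: "\<And>n x. n \<in> {..<N} - Byz \<Longrightarrow> (\<Sum>j<J n. (norm (sg n j x))\<^sup>2) / real (J n) \<le> K\<^sup>2"
    and byz_meas: "\<And>g. (\<lambda>\<omega>. byz \<omega> g) \<in> borel_measurable
        (measure_pmf (pair_pmf (pmf_of_set (group_assignments N G m))
                               (Pi_pmf ({..<N} - Byz) 0 (\<lambda>n. pmf_of_set {..<J n})))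
         \<Otimes>\<^sub>M PiM {..<G} (\<lambda>_. std_gauss))"
  shows
    "(let M = measure_pmf (pair_pmf (pmf_of_set (group_assignments N G m))
                               (Pi_pmf ({..<N} - Byz) 0 (\<lambda>n. pmf_of_set {..<J n})))
              \<Otimes>\<^sub>M PiM {..<G} (\<lambda>_. std_gauss);
          \<rho> = rotaf_rho Byz N P \<eta> sg J w;
          s = \<sigma> / (real m * \<rho> * hmin);
          u = (\<lambda>\<omega>. rotaf_signal Byz N m \<eta> sg w s (fst (fst \<omega>)) (snd (fst \<omega>)) (snd \<omega>) (byz \<omega>));
          \<alpha> = real B / real G;
          C = (2 - 2 * \<alpha>) / (1 - 2 * \<alpha>)
      in (\<integral>\<^sup>+ \<omega>. ennreal ((norm (geomed G (u \<omega>) + \<eta> *\<^sub>R glob_grad N sg J w))\<^sup>2) \<partial>M)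
         \<le> ennreal (C\<^sup>2 * \<eta>\<^sup>2 * (\<delta>\<^sup>2 + \<kappa>\<^sup>2
                 + real DIM('a) * \<sigma>\<^sup>2 / (real m * P * hmin\<^sup>2) * K\<^sup>2)))"
proof -
  define GA where "GA = group_assignments N G m"
  define H where "H = {..<N} - Byz"
  define PM where "PM = pair_pmf (pmf_of_set GA) (Pi_pmf H 0 (\<lambda>n. pmf_of_set {..<J n}))"
  define Q where "Q = PiM {..<G} (\<lambda>_. std_gauss::'a measure)"
  define \<rho> where "\<rho> = rotaf_rho Byz N P \<eta> sg J w"
  define s where "s = \<sigma> / (real m * \<rho> * hmin)"
  define u where "u = (\<lambda>\<omega>. rotaf_signal Byz N m \<eta> sg w s (fst (fst \<omega>)) (snd (fst \<omega>)) (snd \<omega>) (byz \<omega>))"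
  define C where "C = (2 - 2 * (real B / real G)) / (1 - 2 * (real B / real G))"
  define fp where "fp = glob_grad N sg J w"
  define D where "D = \<delta>\<^sup>2 + \<kappa>\<^sup>2"
  have G0: "0 < G" using few_byz by (cases G) auto
  have Hfin: "finite H" unfolding H_def by simp
  have cByz: "card Byz < N"
  proof -
    have "real B < real G" using few_byz by linarith
    moreover have "G \<le> N" using groups by simp
    ultimately show ?thesis using byz_set by linarith
  qed
  have Hne: "H \<noteq> {}"
  proof
    assume "H = {}"
    then have "{..<N} \<subseteq> Byz" unfolding H_def by blast
    then have "card {..<N} \<le> card Byz" using byz_set finite_subset by (intro card_mono) auto
    then show False using cByz by simp
  qed
  define e where "e n = (\<Sum>j<J n. (norm (- \<eta> *\<^sub>R sg n j w))\<^sup>2) / real (J n)" for n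
  define Mx where "Mx = Max (e ` H)"
  have e_eq: "e n = \<eta>\<^sup>2 * ((\<Sum>j<J n. (norm (sg n j w))\<^sup>2) / real (J n))" for n
    unfolding e_def by (simp add: power_mult_distrib sum_distrib_left[symmetric])
  have e_le: "e n \<le> \<eta>\<^sup>2 * K\<^sup>2" if "n \<in> H" for n
    unfolding e_eq using A5[of n w] that unfolding H_def by (intro mult_left_mono) auto
  have e_ge: "0 \<le> e n" for n unfolding e_def by (simp add: sum_nonneg)
  have Mx_le: "Mx \<le> \<eta>\<^sup>2 * K\<^sup>2" unfolding Mx_def using Hfin Hne e_le by (simp add: Max_le_iff)
  have Mx_ge: "0 \<le> Mx"
  proof -
    obtain n where "n \<in> H" using Hne by blast
    then have "e n \<le> Mx" unfolding Mx_def using Hfin by (intro Max_ge) auto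
    then show ?thesis using e_ge[of n] by linarith
  qed
  have rho_eq: "\<rho> = sqrt (P / Mx)" unfolding \<rho>_def rotaf_rho_def Mx_def e_def H_def by simp
  have s2: "s\<^sup>2 \<le> \<eta>\<^sup>2 * (\<sigma>\<^sup>2 / (real m * P * hmin\<^sup>2) * K\<^sup>2)"
  proof (cases "Mx = 0")
    case True
    then have "s = 0" unfolding s_def rho_eq by simp
    then show ?thesis using params groups by simp
  next
    case False
    then have Mp: "0 < Mx" using Mx_ge by simp
    have r2: "\<rho>\<^sup>2 = P / Mx" unfolding rho_eq using Mp params by simp
    have rp: "0 < \<rho>" unfolding rho_eq using Mp params by simp
    have mp: "0 < real m" using groups by simp
    have "s\<^sup>2 = \<sigma>\<^sup>2 / ((real m)\<^sup>2 * \<rho>\<^sup>2 * hmin\<^sup>2)"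
      unfolding s_def by (simp add: power_divide power_mult_distrib)
    also have "\<dots> = \<sigma>\<^sup>2 * Mx / ((real m)\<^sup>2 * P * hmin\<^sup>2)"
      unfolding r2 using Mp params mp by (simp add: field_simps)
    also have "\<dots> \<le> \<sigma>\<^sup>2 * (\<eta>\<^sup>2 * K\<^sup>2) / ((real m)\<^sup>2 * P * hmin\<^sup>2)"
      using Mx_le params mp by (intro divide_right_mono mult_left_mono) auto
    also have "\<dots> \<le> \<sigma>\<^sup>2 * (\<eta>\<^sup>2 * K\<^sup>2) / (real m * P * hmin\<^sup>2)"
    proof (rule divide_left_mono)
      have "real m \<le> (real m)\<^sup>2" using groups by (simp add: power2_eq_square)
      then show "real m * P * hmin\<^sup>2 \<le> (real m)\<^sup>2 * P * hmin\<^sup>2"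
        using params by (intro mult_right_mono) auto
    qed (use params mp in auto)
    also have "\<dots> = \<eta>\<^sup>2 * (\<sigma>\<^sup>2 / (real m * P * hmin\<^sup>2) * K\<^sup>2)" by simp
    finally show ?thesis .
  qed
  define Bd where "Bd a = {g. g < G \<and> (\<exists>n\<in>Byz. a n = g)}" for a :: "nat \<Rightarrow> nat"
  define Gd where "Gd a = {..<G} - Bd a" for a
  define Sg where "Sg a g = {n. n < N \<and> a n = g}" for a :: "nat \<Rightarrow> nat" and g
  define AA where "AA x g = (1 / real m) *\<^sub>R (\<Sum>n\<in>Sg (fst x) g. - \<eta> *\<^sub>R sg n (snd x n) w) + \<eta> *\<^sub>R fp"
    for x :: "(nat \<Rightarrow> nat) \<times> (nat \<Rightarrow> nat)" and g
  define cc where "cc a g = (if g \<in> Gd a then 1 / real (card (Gd a)) else 0)" for a :: "nat \<Rightarrow> nat" and g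
  define Hf where "Hf \<omega> = (\<Sum>g<G. ennreal (C\<^sup>2 * cc (fst (fst \<omega>)) g * (norm (AA (fst \<omega>) g + s *\<^sub>R snd \<omega> g))\<^sup>2))"
    for \<omega> :: "((nat \<Rightarrow> nat) \<times> (nat \<Rightarrow> nat)) \<times> (nat \<Rightarrow> 'a)"
  have finByz: "finite Byz" using byz_set finite_subset by blast
  have Gd_sub: "Gd a \<subseteq> {..<G}" for a unfolding Gd_def by blast
  have Bd_sub: "Bd a \<subseteq> {..<G}" for a unfolding Bd_def by blast
  have Bd_card: "card (Bd a) \<le> B" for a
  proof -
    have "Bd a \<subseteq> a ` Byz" unfolding Bd_def by blast
    then have "card (Bd a) \<le> card (a ` Byz)" using finByz by (intro card_mono) auto
    also have "\<dots> \<le> card Byz" using finByz by (rule card_image_le)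
    finally show ?thesis using byz_set by simp
  qed
  have Gd_card: "card (Gd a) = G - card (Bd a)" for a
    unfolding Gd_def using Bd_sub[of a] by (subst card_Diff_subset) (auto intro: finite_subset)
  have Bd_eq: "{..<G} - Gd a = Bd a" for a unfolding Gd_def using Bd_sub[of a] by blast
  have kb: "real (card ({..<G} - Gd a)) < real (card (Gd a))" for a
    unfolding Bd_eq Gd_card using Bd_card[of a] few_byz by (simp add: of_nat_diff)
  have kpos: "0 < card (Gd a)" for a using kb[of a] by simp
  have Cb: "2 * real (card (Gd a)) / (real (card (Gd a)) - real (card ({..<G} - Gd a))) \<le> C" for a
  proof -
    have k: "real (card (Gd a)) = real G - real (card (Bd a))"
      unfolding Gd_card using Bd_card[of a] few_byz by (simp add: of_nat_diff)
    show ?thesis unfolding k Bd_eq C_def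
      by (rule C_bound) (use Bd_card[of a] few_byz in auto)
  qed
  have pw: "ennreal ((norm (geomed G (u \<omega>) + \<eta> *\<^sub>R fp))\<^sup>2) \<le> Hf \<omega>" for \<omega>
  proof -
    obtain a i \<zeta> where om: "\<omega> = ((a, i), \<zeta>)" by (metis prod.collapse)
    define z where "z = geomed G (u \<omega>)"
    define x where "x = - (\<eta> *\<^sub>R fp)"
    have sq: "(norm (z - x))\<^sup>2 \<le> C\<^sup>2 / real (card (Gd a)) * (\<Sum>g\<in>Gd a. (norm (u \<omega> g - x))\<^sup>2)"
      unfolding z_def by (rule geomed_sq[OF geomed_min[OF G0] Gd_sub kb Cb])
    have ug: "u \<omega> g - x = AA (a, i) g + s *\<^sub>R \<zeta> g" if g: "g \<in> Gd a" for g
    proof -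
      have "\<not> (\<exists>n\<in>Byz. a n = g)" using g unfolding Gd_def Bd_def by auto
      then show ?thesis unfolding u_def om x_def AA_def Sg_def rotaf_signal_def by simp
    qed
    have "ennreal ((norm (geomed G (u \<omega>) + \<eta> *\<^sub>R fp))\<^sup>2) = ennreal ((norm (z - x))\<^sup>2)"
      unfolding z_def x_def by simp
    also have "\<dots> \<le> ennreal (C\<^sup>2 / real (card (Gd a)) * (\<Sum>g\<in>Gd a. (norm (AA (a, i) g + s *\<^sub>R \<zeta> g))\<^sup>2))"
      using sq ug by (intro ennreal_leI) simp
    also have "C\<^sup>2 / real (card (Gd a)) * (\<Sum>g\<in>Gd a. (norm (AA (a, i) g + s *\<^sub>R \<zeta> g))\<^sup>2)
        = (\<Sum>g<G. C\<^sup>2 * cc a g * (norm (AA (a, i) g + s *\<^sub>R \<zeta> g))\<^sup>2)"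
    proof -
      have "(\<Sum>g<G. C\<^sup>2 * cc a g * (norm (AA (a, i) g + s *\<^sub>R \<zeta> g))\<^sup>2)
          = (\<Sum>g<G. if g \<in> Gd a then C\<^sup>2 / real (card (Gd a)) * (norm (AA (a, i) g + s *\<^sub>R \<zeta> g))\<^sup>2 else 0)"
        by (rule sum.cong) (auto simp: cc_def)
      also have "\<dots> = (\<Sum>g\<in>{..<G} \<inter> Gd a. C\<^sup>2 / real (card (Gd a)) * (norm (AA (a, i) g + s *\<^sub>R \<zeta> g))\<^sup>2)"
        by (rule sum.inter_restrict[symmetric]) simp
      also have "{..<G} \<inter> Gd a = Gd a" using Gd_sub by blast
      finally show ?thesis by (simp add: sum_distrib_left)
    qed
    also have "ennreal (\<Sum>g<G. C\<^sup>2 * cc a g * (norm (AA (a, i) g + s *\<^sub>R \<zeta> g))\<^sup>2) = Hf \<omega>"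
      unfolding Hf_def om by (subst sum_ennreal) (auto simp: cc_def)
    finally show ?thesis .
  qed
  have bnd: "(\<Sum>j<J n. (norm (sg n j w - fp))\<^sup>2) / real (J n) \<le> D" if n: "n \<in> H" for n
  proof -
    have nN: "n \<in> {..<N} - Byz" using n unfolding H_def .
    have J0: "0 < J n" using samples nN by auto
    have lg: "loc_grad sg J n w = (1 / real (J n)) *\<^sub>R (\<Sum>j<J n. sg n j w)" by (simp add: loc_grad_def)
    have "(\<Sum>j<J n. (norm (sg n j w - fp))\<^sup>2) / real (J n)
        = (\<Sum>j<J n. (norm (sg n j w - loc_grad sg J n w))\<^sup>2) / real (J n) + (norm (loc_grad sg J n w - fp))\<^sup>2"
      unfolding var_decomp[OF J0, of "\<lambda>j. sg n j w" fp] lg using J0 by (simp add: field_simps)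
    also have "\<dots> \<le> \<kappa>\<^sup>2 + \<delta>\<^sup>2" using A4[OF nN, of w] A3[OF nN, of w] unfolding fp_def by linarith
    finally show ?thesis unfolding D_def by simp
  qed
  have D0: "0 \<le> D" unfolding D_def by simp
  have Qprob: "prob_space Q" unfolding Q_def by (rule prob_space_PiM) (rule std_gauss_prob)
  have sg_sets: "sets (std_gauss::'a measure) = sets borel" by (simp add: std_gauss_def)
  have cc0: "0 \<le> cc a g" for a g by (simp add: cc_def)
  have m1: "(\<lambda>\<omega>. cc (fst (fst \<omega>)) g) \<in> borel_measurable (measure_pmf PM \<Otimes>\<^sub>M Q)" for g
    by (rule measurable_compose[OF measurable_fst, of "\<lambda>x. cc (fst x) g"]) simp
  have m2: "(\<lambda>\<omega>. AA (fst \<omega>) g) \<in> borel_measurable (measure_pmf PM \<Otimes>\<^sub>M Q)" for g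
    by (rule measurable_compose[OF measurable_fst, of "\<lambda>x. AA x g"]) simp
  have m3: "(\<lambda>\<omega>. snd \<omega> g) \<in> borel_measurable (measure_pmf PM \<Otimes>\<^sub>M Q)" if "g \<in> {..<G}" for g
  proof -
    have "(\<lambda>y. y g) \<in> Q \<rightarrow>\<^sub>M (std_gauss::'a measure)" unfolding Q_def using that by simp
    then have "(\<lambda>\<omega>. snd \<omega> g) \<in> (measure_pmf PM \<Otimes>\<^sub>M Q) \<rightarrow>\<^sub>M (std_gauss::'a measure)"
      by (rule measurable_compose[OF measurable_snd])
    then show ?thesis by (simp only: measurable_cong_sets[OF refl sg_sets])
  qed
  have Hm: "Hf \<in> borel_measurable (measure_pmf PM \<Otimes>\<^sub>M Q)"
    unfolding Hf_def
  proof (rule borel_measurable_sum)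
    fix g assume g: "g \<in> {..<G}"
    have v: "(\<lambda>\<omega>. AA (fst \<omega>) g + s *\<^sub>R snd \<omega> g) \<in> borel_measurable (measure_pmf PM \<Otimes>\<^sub>M Q)"
      by (rule borel_measurable_add[OF m2 borel_measurable_scaleR[OF borel_measurable_const m3[OF g]]])
    have n: "(\<lambda>\<omega>. norm (AA (fst \<omega>) g + s *\<^sub>R snd \<omega> g)) \<in> borel_measurable (measure_pmf PM \<Otimes>\<^sub>M Q)"
      by (rule measurable_compose[OF v borel_measurable_norm])
    show "(\<lambda>\<omega>. ennreal (C\<^sup>2 * cc (fst (fst \<omega>)) g * (norm (AA (fst \<omega>) g + s *\<^sub>R snd \<omega> g))\<^sup>2))
        \<in> borel_measurable (measure_pmf PM \<Otimes>\<^sub>M Q)"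
      by (rule measurable_compose[OF borel_measurable_times[OF borel_measurable_times[OF borel_measurable_const m1]
            borel_measurable_power[OF n]] measurable_ennreal])
  qed
  have step1: "(\<integral>\<^sup>+ \<omega>. ennreal ((norm (geomed G (u \<omega>) + \<eta> *\<^sub>R fp))\<^sup>2) \<partial>(measure_pmf PM \<Otimes>\<^sub>M Q))
      \<le> (\<integral>\<^sup>+ \<omega>. Hf \<omega> \<partial>(measure_pmf PM \<Otimes>\<^sub>M Q))"
    by (rule nn_integral_mono) (rule pw)
  have step2: "(\<integral>\<^sup>+ \<omega>. Hf \<omega> \<partial>(measure_pmf PM \<Otimes>\<^sub>M Q)) = (\<integral>\<^sup>+x. \<integral>\<^sup>+y. Hf (x, y) \<partial>Q \<partial>measure_pmf PM)"
    by (rule sigma_finite_measure.nn_integral_fst[OF prob_space_imp_sigma_finite[OF Qprob] Hm, symmetric])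
  have inner: "(\<integral>\<^sup>+y. Hf (x, y) \<partial>Q) = (\<Sum>g<G. ennreal (C\<^sup>2 * cc (fst x) g * ((norm (AA x g))\<^sup>2 + real DIM('a) * s\<^sup>2)))" for x
  proof -
    have fm: "(\<lambda>\<zeta>::'a. ennreal ((norm (AA x g + s *\<^sub>R \<zeta>))\<^sup>2)) \<in> borel_measurable std_gauss" for g
      by (subst measurable_cong_sets[OF sg_sets refl]) measurable
    have "(\<integral>\<^sup>+y. Hf (x, y) \<partial>Q) = (\<Sum>g<G. \<integral>\<^sup>+y. ennreal (C\<^sup>2 * cc (fst x) g * (norm (AA x g + s *\<^sub>R y g))\<^sup>2) \<partial>Q)"
      unfolding Hf_def fst_conv snd_conv
    proof (rule nn_integral_sum)
      fix g assume "g \<in> {..<G}"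
      then have "(\<lambda>y. y g) \<in> Q \<rightarrow>\<^sub>M (std_gauss::'a measure)" unfolding Q_def by simp
      then have y: "(\<lambda>y. y g) \<in> borel_measurable Q" by (simp only: measurable_cong_sets[OF refl sg_sets])
      have v: "(\<lambda>y. AA x g + s *\<^sub>R y g) \<in> borel_measurable Q"
        by (rule borel_measurable_add[OF borel_measurable_const borel_measurable_scaleR[OF borel_measurable_const y]])
      have n: "(\<lambda>y. norm (AA x g + s *\<^sub>R y g)) \<in> borel_measurable Q"
        by (rule measurable_compose[OF v borel_measurable_norm])
      show "(\<lambda>y. ennreal (C\<^sup>2 * cc (fst x) g * (norm (AA x g + s *\<^sub>R y g))\<^sup>2)) \<in> borel_measurable Q"
        by (rule measurable_compose[OF borel_measurable_times[OF borel_measurable_const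
            borel_measurable_power[OF n]] measurable_ennreal])
    qed
    also have "\<dots> = (\<Sum>g<G. ennreal (C\<^sup>2 * cc (fst x) g * ((norm (AA x g))\<^sup>2 + real DIM('a) * s\<^sup>2)))"
    proof (rule sum.cong[OF refl])
      fix g assume g: "g \<in> {..<G}"
      have "(\<integral>\<^sup>+y. ennreal (C\<^sup>2 * cc (fst x) g * (norm (AA x g + s *\<^sub>R y g))\<^sup>2) \<partial>Q)
          = (\<integral>\<^sup>+y. ennreal (C\<^sup>2 * cc (fst x) g) * ennreal ((norm (AA x g + s *\<^sub>R y g))\<^sup>2) \<partial>Q)"
        using cc0 by (simp add: ennreal_mult)
      also have "\<dots> = ennreal (C\<^sup>2 * cc (fst x) g) * (\<integral>\<^sup>+y. ennreal ((norm (AA x g + s *\<^sub>R y g))\<^sup>2) \<partial>Q)"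
        by (rule nn_integral_cmult) (use fm[of g] g in \<open>simp add: Q_def\<close>)
      also have "(\<integral>\<^sup>+y. ennreal ((norm (AA x g + s *\<^sub>R y g))\<^sup>2) \<partial>Q) = ennreal ((norm (AA x g))\<^sup>2 + real DIM('a) * s\<^sup>2)"
        unfolding Q_def
        by (subst PiM_component_nn[OF std_gauss_prob g finite_lessThan fm]) (rule std_gauss_sq)
      finally show "(\<integral>\<^sup>+y. ennreal (C\<^sup>2 * cc (fst x) g * (norm (AA x g + s *\<^sub>R y g))\<^sup>2) \<partial>Q)
          = ennreal (C\<^sup>2 * cc (fst x) g * ((norm (AA x g))\<^sup>2 + real DIM('a) * s\<^sup>2))"
        using cc0 by (simp add: ennreal_mult)
    qed
    finally show ?thesis .
  qed
  have GAp: "finite GA" "GA \<noteq> {}" unfolding GA_def using GA_props[OF groups] by auto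
  have Hsamp: "\<And>n. n \<in> H \<Longrightarrow> 0 < J n" using samples unfolding H_def by auto
  let ?q = "real DIM('a) * s\<^sup>2"
  let ?P = "Pi_pmf H 0 (\<lambda>n. pmf_of_set {..<J n})"
  have q0: "0 \<le> ?q" by simp
  have cc_sum: "(\<Sum>g<G. cc a g) = 1" for a
  proof -
    have "(\<Sum>g<G. cc a g) = (\<Sum>g\<in>{..<G} \<inter> Gd a. 1 / real (card (Gd a)))"
      unfolding cc_def by (simp only: sum.inter_restrict[OF finite_lessThan])
    also have "{..<G} \<inter> Gd a = Gd a" using Gd_sub by blast
    finally show ?thesis using kpos[of a] by simp
  qed
  have per_a: "(\<integral>\<^sup>+i. (\<Sum>g<G. ennreal (C\<^sup>2 * cc a g * ((norm (AA (a, i) g))\<^sup>2 + ?q))) \<partial>measure_pmf ?P)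
      \<le> ennreal (C\<^sup>2 * (\<eta>\<^sup>2 * D + ?q))" if a: "a \<in> GA" for a
  proof -
    have "(\<integral>\<^sup>+i. (\<Sum>g<G. ennreal (C\<^sup>2 * cc a g * ((norm (AA (a, i) g))\<^sup>2 + ?q))) \<partial>measure_pmf ?P)
        = (\<Sum>g<G. \<integral>\<^sup>+i. ennreal (C\<^sup>2 * cc a g * ((norm (AA (a, i) g))\<^sup>2 + ?q)) \<partial>measure_pmf ?P)"
      by (rule nn_integral_sum) simp
    also have "\<dots> \<le> (\<Sum>g<G. ennreal (C\<^sup>2 * cc a g * (\<eta>\<^sup>2 * D + ?q)))"
    proof (rule sum_mono)
      fix g assume g: "g \<in> {..<G}"
      show "(\<integral>\<^sup>+i. ennreal (C\<^sup>2 * cc a g * ((norm (AA (a, i) g))\<^sup>2 + ?q)) \<partial>measure_pmf ?P)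
          \<le> ennreal (C\<^sup>2 * cc a g * (\<eta>\<^sup>2 * D + ?q))"
      proof (cases "g \<in> Gd a")
        case False
        then show ?thesis by (simp add: cc_def)
      next
        case True
        have Sm: "card (Sg a g) = m"
          using a g unfolding GA_def group_assignments_def Sg_def by auto
        have SH: "Sg a g \<subseteq> H"
        proof
          fix n assume n: "n \<in> Sg a g"
          have "n \<notin> Byz"
          proof
            assume "n \<in> Byz"
            then have "g \<in> Bd a" using n g unfolding Sg_def Bd_def by auto
            then show False using True unfolding Gd_def by blast
          qed
          then show "n \<in> H" using n unfolding Sg_def H_def by auto
        qed
        have ge: "(\<integral>\<^sup>+i. ennreal ((norm (AA (a, i) g))\<^sup>2) \<partial>measure_pmf ?P) \<le> ennreal (\<eta>\<^sup>2 * D)"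
          unfolding AA_def fst_conv snd_conv
          by (rule group_exp[where S="Sg a g" and H=H and J=J and sg=sg and w=w and c=fp and D=D
                and \<eta>=\<eta> and m=m, OF SH Sm groups(2) Hfin Hsamp bnd D0])
        have c0: "0 \<le> C\<^sup>2 * cc a g" using cc0 by simp
        have "(\<integral>\<^sup>+i. ennreal (C\<^sup>2 * cc a g * ((norm (AA (a, i) g))\<^sup>2 + ?q)) \<partial>measure_pmf ?P)
            = (\<integral>\<^sup>+i. ennreal (C\<^sup>2 * cc a g) * (ennreal ((norm (AA (a, i) g))\<^sup>2) + ennreal ?q) \<partial>measure_pmf ?P)"
          using c0 q0 by (simp add: ennreal_mult ennreal_plus)
        also have "\<dots> = ennreal (C\<^sup>2 * cc a g) * (\<integral>\<^sup>+i. ennreal ((norm (AA (a, i) g))\<^sup>2) + ennreal ?q \<partial>measure_pmf ?P)"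
          by (rule nn_integral_cmult) simp
        also have "(\<integral>\<^sup>+i. ennreal ((norm (AA (a, i) g))\<^sup>2) + ennreal ?q \<partial>measure_pmf ?P)
            = (\<integral>\<^sup>+i. ennreal ((norm (AA (a, i) g))\<^sup>2) \<partial>measure_pmf ?P) + ennreal ?q"
          by (subst nn_integral_add) (simp_all add: nn_integral_const measure_pmf.emeasure_space_1)
        also have "ennreal (C\<^sup>2 * cc a g) * \<dots> \<le> ennreal (C\<^sup>2 * cc a g) * (ennreal (\<eta>\<^sup>2 * D) + ennreal ?q)"
          by (intro mult_left_mono add_right_mono ge) simp
        also have "\<dots> = ennreal (C\<^sup>2 * cc a g * (\<eta>\<^sup>2 * D + ?q))"
          using c0 q0 D0 by (simp add: ennreal_mult ennreal_plus)
        finally show ?thesis .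
      qed
    qed
    also have "\<dots> = ennreal (\<Sum>g<G. C\<^sup>2 * cc a g * (\<eta>\<^sup>2 * D + ?q))"
      using cc0 D0 by (intro sum_ennreal) simp
    also have "(\<Sum>g<G. C\<^sup>2 * cc a g * (\<eta>\<^sup>2 * D + ?q)) = C\<^sup>2 * (\<eta>\<^sup>2 * D + ?q) * (\<Sum>g<G. cc a g)"
      by (simp add: sum_distrib_right mult.commute mult.left_commute mult.assoc)
    finally show ?thesis by (simp add: cc_sum)
  qed
  have outer: "(\<integral>\<^sup>+x. (\<Sum>g<G. ennreal (C\<^sup>2 * cc (fst x) g * ((norm (AA x g))\<^sup>2 + ?q))) \<partial>measure_pmf PM)
      \<le> ennreal (C\<^sup>2 * (\<eta>\<^sup>2 * D + ?q))"
  proof -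
    have "(\<integral>\<^sup>+x. (\<Sum>g<G. ennreal (C\<^sup>2 * cc (fst x) g * ((norm (AA x g))\<^sup>2 + ?q))) \<partial>measure_pmf PM)
        = (\<integral>\<^sup>+a. \<integral>\<^sup>+i. (\<Sum>g<G. ennreal (C\<^sup>2 * cc a g * ((norm (AA (a, i) g))\<^sup>2 + ?q))) \<partial>measure_pmf ?P
            \<partial>measure_pmf (pmf_of_set GA))"
      unfolding PM_def by (simp add: nn_integral_pair_pmf')
    also have "\<dots> \<le> (\<integral>\<^sup>+a. ennreal (C\<^sup>2 * (\<eta>\<^sup>2 * D + ?q)) \<partial>measure_pmf (pmf_of_set GA))"
      by (rule nn_integral_mono_AE, rule AE_pmfI) (use per_a GAp in \<open>simp add: set_pmf_of_set\<close>)
    also have "\<dots> = ennreal (C\<^sup>2 * (\<eta>\<^sup>2 * D + ?q))"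
      by (simp add: nn_integral_const measure_pmf.emeasure_space_1)
    finally show ?thesis .
  qed
  have main: "(\<integral>\<^sup>+ \<omega>. ennreal ((norm (geomed G (u \<omega>) + \<eta> *\<^sub>R fp))\<^sup>2) \<partial>(measure_pmf PM \<Otimes>\<^sub>M Q))
     \<le> ennreal (C\<^sup>2 * (\<eta>\<^sup>2 * D + real DIM('a) * s\<^sup>2))"
    using step1 unfolding step2 inner using outer by (rule order.trans)
  have final: "C\<^sup>2 * (\<eta>\<^sup>2 * D + real DIM('a) * s\<^sup>2) \<le> C\<^sup>2 * \<eta>\<^sup>2 * (\<delta>\<^sup>2 + \<kappa>\<^sup>2
                 + real DIM('a) * \<sigma>\<^sup>2 / (real m * P * hmin\<^sup>2) * K\<^sup>2)"
  proof -
    have "C\<^sup>2 * (\<eta>\<^sup>2 * D + real DIM('a) * s\<^sup>2) \<le> C\<^sup>2 * (\<eta>\<^sup>2 * D + real DIM('a) * (\<eta>\<^sup>2 * (\<sigma>\<^sup>2 / (real m * P * hmin\<^sup>2) * K\<^sup>2)))"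
      using s2 by (intro mult_left_mono add_left_mono) auto
    then show ?thesis unfolding D_def by (simp add: algebra_simps)
  qed
  have "(\<integral>\<^sup>+ \<omega>. ennreal ((norm (geomed G (u \<omega>) + \<eta> *\<^sub>R fp))\<^sup>2) \<partial>(measure_pmf PM \<Otimes>\<^sub>M Q))
     \<le> ennreal (C\<^sup>2 * \<eta>\<^sup>2 * (\<delta>\<^sup>2 + \<kappa>\<^sup>2
                 + real DIM('a) * \<sigma>\<^sup>2 / (real m * P * hmin\<^sup>2) * K\<^sup>2))"
    using main ennreal_leI[OF final] by (rule order.trans)
  then show ?thesis
    unfolding Let_def u_def s_def \<rho>_def PM_def Q_def fp_def C_def GA_def H_def .
qed

end
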